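(* Let $\varphi\colon A^*\to A^*$ be a non-erasing substitution extending over $a\in A$, let $I_\varphi$ be the set of $\varphi$-growing letters, and suppose the set $B_\varphi$ of $\varphi$-bounded factors of $\varphi^{\infty}(a)$ (including the empty word) is finite. Let $C$ be the finite alphabet of symbols $[twt']$ with $t,t'\in I_\varphi$, $w\in B_\varphi$ and $twt'$ a factor of $\varphi^{\infty}(a)$, and define $\psi\colon C^*\to C^*$ by $\psi([twt'])=[t_1w_1t_2][t_2w_2t_3]\cdots[t_kw_kt_{k+1}]$, where $\varphi(tw)=w_0t_1w_1t_2\cdots t_kw_k'$ with $t_i\in I_\varphi$ and $w_i,w_k'\in B_\varphi$, $\varphi(t')$ begins with $w_k''t_{k+1}$ with $t_{k+1}\in I_\varphi$, $w_k''\in B_\varphi$, and $w_k=w_k'w_k''$. Then every letter of $C$ is $\psi$-growing.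
   Context: A substitution is non-erasing if no letter is mapped to the empty word. $\varphi$ extends over $a$ if $\varphi(a)=av$ with $\varphi^k(v)\neq\varepsilon$ for all $k$, and then $\varphi^{\infty}(a)=av\varphi(v)\varphi^2(v)\cdots$. A finite word $w$ is $\varphi$-bounded if the sequence $(|\varphi^n(w)|)_n$ is bounded (equivalently $w,\varphi(w),\varphi^2(w),\dots$ is ultimately periodic), and $\varphi$-growing otherwise; a letter $c\in C$ is $\psi$-growing if $|\psi^n(c)|\to\infty$. *)

theory Defs
  imports Complex_Main
begin

definition subst_word :: "('a \<Rightarrow> 'b list) \<Rightarrow> 'a list \<Rightarrow> 'b list" where
  "subst_word f w = concat (map f w)"

definition iter_subst :: "('a \<Rightarrow> 'a list) \<Rightarrow> nat \<Rightarrow> 'a list \<Rightarrow> 'a list" where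
  "iter_subst f n = (subst_word f ^^ n)"

definition non_erasing :: "('a \<Rightarrow> 'a list) \<Rightarrow> bool" where
  "non_erasing f \<longleftrightarrow> (\<forall>c. f c \<noteq> [])"

definition extends_over :: "('a \<Rightarrow> 'a list) \<Rightarrow> 'a \<Rightarrow> bool" where
  "extends_over f a \<longleftrightarrow>
     (\<exists>v. f a = a # v \<and> (\<forall>k. iter_subst f k v \<noteq> []))"

text \<open>Finite prefixes \<open>a v \<phi>(v) \<dots> \<phi>^{n-1}(v)\<close> of \<open>\<phi>^\<infinity>(a)\<close>, where \<open>\<phi>(a) = a v\<close>.\<close>
definition inf_prefix :: "('a \<Rightarrow> 'a list) \<Rightarrow> 'a \<Rightarrow> nat \<Rightarrow> 'a list" where
  "inf_prefix f a n = a # concat (map (\<lambda>k. iter_subst f k (tl (f a))) [0..<n])"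

text \<open>The infinite word \<open>\<phi>^\<infinity>(a) = a v \<phi>(v) \<phi>^2(v) \<dots>\<close> (letter at position \<open>i\<close>;
  when \<open>\<phi>\<close> extends over \<open>a\<close>, the prefix of index \<open>Suc i\<close> has length \<open>> i\<close>).\<close>
definition inf_word :: "('a \<Rightarrow> 'a list) \<Rightarrow> 'a \<Rightarrow> nat \<Rightarrow> 'a" where
  "inf_word f a i = inf_prefix f a (Suc i) ! i"

definition is_factor :: "(nat \<Rightarrow> 'a) \<Rightarrow> 'a list \<Rightarrow> bool" where
  "is_factor x w \<longleftrightarrow> (\<exists>i. w = map x [i..<i + length w])"

definition bounded_word :: "('a \<Rightarrow> 'a list) \<Rightarrow> 'a list \<Rightarrow> bool" where
  "bounded_word f w \<longleftrightarrow> bdd_above (range (\<lambda>n. length (iter_subst f n w)))"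

definition growing_letters :: "('a \<Rightarrow> 'a list) \<Rightarrow> 'a set" where
  "growing_letters f = {c. \<not> bounded_word f [c]}"

definition bounded_factors :: "('a \<Rightarrow> 'a list) \<Rightarrow> 'a \<Rightarrow> 'a list set" where
  "bounded_factors f a = {w. is_factor (inf_word f a) w \<and> bounded_word f w}"

definition C_alph :: "('a \<Rightarrow> 'a list) \<Rightarrow> 'a \<Rightarrow> ('a \<times> 'a list \<times> 'a) set" where
  "C_alph f a = {(t, w, t'). t \<in> growing_letters f \<and> t' \<in> growing_letters f \<and>
      w \<in> bounded_factors f a \<and> is_factor (inf_word f a) (t # w @ [t'])}"

text \<open>Unique decomposition of a word as \<open>w_0 t_1 w_1 \<dots> t_k w_k\<close>, where the \<open>t_i\<close>
  are exactly the occurrences of letters satisfying \<open>P\<close>. Result: \<open>(w_0, [(t_1,w_1),\<dots>,(t_k,w_k)])\<close>.\<close>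
fun grow_split :: "('a \<Rightarrow> bool) \<Rightarrow> 'a list \<Rightarrow> 'a list \<times> ('a \<times> 'a list) list" where
  "grow_split P [] = ([], [])"
| "grow_split P (x # xs) =
     (case grow_split P xs of (u, bs) \<Rightarrow>
        if P x then ([], (x, u) # bs) else (x # u, bs))"

definition psi :: "('a \<Rightarrow> 'a list) \<Rightarrow> ('a \<times> 'a list \<times> 'a) \<Rightarrow> ('a \<times> 'a list \<times> 'a) list" where
  "psi f s = (case s of (t, w, t') \<Rightarrow>
     (let G = (\<lambda>c. c \<in> growing_letters f);
          bs = snd (grow_split G (subst_word f (t # w)));
          (w'', bs') = grow_split G (f t');
          ts = map fst bs @ [fst (hd bs')];
          ws = map snd (butlast bs) @ [snd (last bs) @ w'']
      in map (\<lambda>i. (ts ! i, ws ! i, ts ! Suc i)) [0..<length bs]))"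

end

theory Submission
  imports Defs
begin


lemma sw_append[simp]: "subst_word f (u @ v) = subst_word f u @ subst_word f v"
  by (simp add: subst_word_def)
lemma sw_Nil[simp]: "subst_word f [] = []" by (simp add: subst_word_def)
lemma sw_Cons: "subst_word f (c # u) = f c @ subst_word f u" by (simp add: subst_word_def)
lemma sw_single[simp]: "subst_word f [c] = f c" by (simp add: subst_word_def)
lemma sw_set: "set (subst_word f u) = (\<Union>c\<in>set u. set (f c))" by (simp add: subst_word_def)
lemma sw_concat: "subst_word f (concat xs) = concat (map (subst_word f) xs)"
  by (induction xs) auto

lemma it_0[simp]: "iter_subst f 0 w = w" by (simp add: iter_subst_def)
lemma it_Suc: "iter_subst f (Suc n) w = subst_word f (iter_subst f n w)" by (simp add: iter_subst_def)
lemma it_Suc2: "iter_subst f (Suc n) w = iter_subst f n (subst_word f w)"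
  by (simp add: iter_subst_def funpow_Suc_right del: funpow.simps)
lemma it_Nil[simp]: "iter_subst f n [] = []" by (induction n) (auto simp: it_Suc)
lemma it_append[simp]: "iter_subst f n (u @ v) = iter_subst f n u @ iter_subst f n v"
  by (induction n) (auto simp: it_Suc)
lemma it_Cons: "iter_subst f n (c # v) = iter_subst f n [c] @ iter_subst f n v"
  using it_append[of f n "[c]" v] by simp
lemma it_add: "iter_subst f m (iter_subst f n w) = iter_subst f (m + n) w"
  by (simp add: iter_subst_def funpow_add)

lemma bw_iff: "bounded_word f w \<longleftrightarrow> (\<exists>B. \<forall>n. length (iter_subst f n w) \<le> B)"
  by (auto simp: bounded_word_def bdd_above_def)

lemma nongrow_img:
  assumes "c \<notin> growing_letters f" "d \<in> set (f c)"
  shows "d \<notin> growing_letters f"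
proof -
  from assms(1) obtain B where B: "\<And>n. length (iter_subst f n [c]) \<le> B"
    by (auto simp: growing_letters_def bw_iff)
  from assms(2) obtain p q where pq: "f c = p @ d # q" by (meson split_list)
  have "length (iter_subst f n [d]) \<le> B" for n
  proof -
    have "length (iter_subst f n [d]) \<le> length (iter_subst f n (f c))"
      unfolding pq by (simp add: it_Cons[of f n d q])
    also have "\<dots> = length (iter_subst f (Suc n) [c])" by (simp add: it_Suc2)
    finally show ?thesis using B[of "Suc n"] by simp
  qed
  then show ?thesis by (auto simp: growing_letters_def bw_iff)
qed

lemma bounded_all:
  assumes "\<forall>c\<in>set w. c \<notin> growing_letters f"
  shows "bounded_word f w"
  using assms
proof (induction w)
  case Nil then show ?case by (auto simp: bw_iff)
next
  case (Cons c w)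
  then obtain B1 B2 where B1: "\<And>n. length (iter_subst f n [c]) \<le> B1"
    and B2: "\<And>n. length (iter_subst f n w) \<le> B2"
    by (auto simp: bw_iff growing_letters_def)
  have "length (iter_subst f n (c # w)) \<le> B1 + B2" for n
    using B1[of n] B2[of n] by (simp add: it_Cons[of f n c w])
  then show ?case by (auto simp: bw_iff)
qed

lemma grow_img:
  assumes "c \<in> growing_letters f"
  shows "\<exists>d\<in>set (f c). d \<in> growing_letters f"
proof (rule ccontr)
  assume "\<not> ?thesis"
  then have "bounded_word f (f c)" by (intro bounded_all) auto
  then obtain B where B: "\<And>n. length (iter_subst f n (f c)) \<le> B" by (auto simp: bw_iff)
  have "length (iter_subst f n [c]) \<le> max 1 B" for n
    using B by (cases n) (auto simp: it_Suc2 le_max_iff_disj)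
  then show False using assms by (auto simp: growing_letters_def bw_iff)
qed

lemma bounded_letters:
  assumes "bounded_word f w" "c \<in> set w"
  shows "c \<notin> growing_letters f"
proof -
  from assms(1) obtain B where B: "\<And>n. length (iter_subst f n w) \<le> B" by (auto simp: bw_iff)
  from assms(2) obtain p q where pq: "w = p @ c # q" by (meson split_list)
  have "length (iter_subst f n [c]) \<le> B" for n
    using B[of n] unfolding pq by (simp add: it_Cons[of f n c q])
  then show ?thesis by (auto simp: growing_letters_def bw_iff)
qed

lemma iter_nongrow:
  assumes "\<forall>c\<in>set u. c \<notin> growing_letters f"
  shows "\<forall>c\<in>set (iter_subst f n u). c \<notin> growing_letters f"
  using assms
proof (induction n)
  case 0 then show ?case by simp
next
  case (Suc n) then show ?case by (auto simp: it_Suc sw_set dest: nongrow_img)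
qed

definition gcount :: "('a \<Rightarrow> 'a list) \<Rightarrow> 'a list \<Rightarrow> nat" where
  "gcount f u = length (filter (\<lambda>c. c \<in> growing_letters f) u)"

lemma gcount_append[simp]: "gcount f (u @ v) = gcount f u + gcount f v"
  by (simp add: gcount_def)

lemma gcount_zero: "\<forall>c\<in>set u. c \<notin> growing_letters f \<Longrightarrow> gcount f u = 0"
  by (simp add: gcount_def filter_empty_conv)

lemma gcount_step: "gcount f u \<le> gcount f (subst_word f u)"
proof (induction u)
  case Nil then show ?case by simp
next
  case (Cons c u)
  have "c \<in> growing_letters f \<Longrightarrow> 1 \<le> gcount f (f c)"
    using grow_img[of c f] by (auto simp: gcount_def filter_empty_conv Suc_le_eq)
  then show ?case using Cons by (cases "c \<in> growing_letters f") (auto simp: sw_Cons gcount_def)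
qed

lemma gcount_mono: "n \<le> m \<Longrightarrow> gcount f (iter_subst f n u) \<le> gcount f (iter_subst f m u)"
  by (rule lift_Suc_mono_le[of "\<lambda>n. gcount f (iter_subst f n u)"])
     (auto simp: it_Suc intro: gcount_step)

lemma block_bound:
  assumes "\<And>ps v ss. u = ps @ v @ ss \<Longrightarrow> \<forall>c\<in>set v. \<not> P c \<Longrightarrow> length v \<le> L"
  shows "length u \<le> length (filter P u) + (length (filter P u) + 1) * L"
  using assms
proof (induction "length u" arbitrary: u rule: less_induct)
  case less
  define tw where "tw = takeWhile (\<lambda>c. \<not> P c) u"
  define rest where "rest = dropWhile (\<lambda>c. \<not> P c) u"
  have u: "u = tw @ rest" by (simp add: tw_def rest_def)
  have twP: "\<forall>c\<in>set tw. \<not> P c" by (auto simp: tw_def dest: set_takeWhileD)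
  have twL: "length tw \<le> L" using less.prems[of "[]" tw rest] u twP by simp
  show ?case
  proof (cases rest)
    case Nil
    then show ?thesis using u twL twP by (simp add: filter_empty_conv)
  next
    case (Cons p u')
    have Pp: "P p" using Cons hd_dropWhile[of "\<lambda>c. \<not> P c" u] by (simp add: rest_def)
    have IH: "length u' \<le> length (filter P u') + (length (filter P u') + 1) * L"
      apply (rule less.hyps)
      using u Cons apply simp
      using less.prems[of "tw @ p # _"] u Cons by auto
    have f: "filter P u = p # filter P u'" using u Cons Pp twP by (simp add: filter_empty_conv)
    show ?thesis using IH twL u Cons f by (simp add: algebra_simps)
  qed
qed



lemma inf_prefix_Suc:
  "inf_prefix f a (Suc n) = inf_prefix f a n @ iter_subst f n (tl (f a))"
  by (simp add: inf_prefix_def)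

lemma inf_prefix_mono: "n \<le> m \<Longrightarrow> \<exists>s. inf_prefix f a m = inf_prefix f a n @ s"
proof (induction m rule: dec_induct)
  case base then show ?case by auto
next
  case (step m) then show ?case by (auto simp: inf_prefix_Suc)
qed

context
  fixes f :: "'a \<Rightarrow> 'a list" and a :: 'a
  assumes ext: "extends_over f a"
begin

lemma fa: "f a = a # tl (f a)" and ne: "\<And>k. iter_subst f k (tl (f a)) \<noteq> []"
  using ext by (auto simp: extends_over_def)

lemma inf_prefix_len: "Suc n \<le> length (inf_prefix f a n)"
proof (induction n)
  case 0 then show ?case by (simp add: inf_prefix_def)
next
  case (Suc n)
  have "0 < length (iter_subst f n (tl (f a)))" using ne[of n] by simp
  then show ?case unfolding inf_prefix_Suc length_append using Suc.IH by linarith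
qed

lemma sw_prefix: "subst_word f (inf_prefix f a n) = inf_prefix f a (Suc n)"
proof (induction n)
  case 0 then show ?case using fa by (simp add: inf_prefix_def)
next
  case (Suc n)
  have "subst_word f (inf_prefix f a (Suc n)) = subst_word f (inf_prefix f a n) @ subst_word f (iter_subst f n (tl (f a)))"
    by (simp add: inf_prefix_Suc[of f a n])
  also have "\<dots> = inf_prefix f a (Suc n) @ iter_subst f (Suc n) (tl (f a))" by (simp add: Suc it_Suc)
  also have "\<dots> = inf_prefix f a (Suc (Suc n))" by (rule inf_prefix_Suc[symmetric])
  finally show ?case .
qed

lemma iter_a: "iter_subst f n [a] = inf_prefix f a n"
proof (induction n)
  case 0 then show ?case by (simp add: inf_prefix_def)
next
  case (Suc n)
  then show ?case by (simp add: it_Suc sw_prefix)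
qed

lemma inf_word_nth: "j < length (inf_prefix f a n) \<Longrightarrow> inf_word f a j = inf_prefix f a n ! j"
proof -
  assume j: "j < length (inf_prefix f a n)"
  obtain s1 where s1: "inf_prefix f a (max n (Suc j)) = inf_prefix f a n @ s1"
    using inf_prefix_mono[of n "max n (Suc j)" f a] by auto
  obtain s2 where s2: "inf_prefix f a (max n (Suc j)) = inf_prefix f a (Suc j) @ s2"
    using inf_prefix_mono[of "Suc j" "max n (Suc j)" f a] by auto
  have j2: "j < length (inf_prefix f a (Suc j))" using inf_prefix_len[of "Suc j"] by simp
  have "inf_prefix f a n ! j = inf_prefix f a (max n (Suc j)) ! j" using s1 j by (simp add: nth_append)
  also have "\<dots> = inf_prefix f a (Suc j) ! j" using s2 j2 by (simp add: nth_append)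
  finally show ?thesis by (simp add: inf_word_def)
qed

lemma factor_imp:
  assumes "is_factor (inf_word f a) u"
  shows "\<exists>n ps ss. iter_subst f n [a] = ps @ u @ ss"
proof -
  from assms obtain i where u: "u = map (inf_word f a) [i..<i + length u]"
    by (auto simp: is_factor_def)
  define P where "P = inf_prefix f a (i + length u)"
  have lenP: "i + length u < length P" using inf_prefix_len[of "i + length u"] by (simp add: P_def)
  have "u = take (length u) (drop i P)"
  proof (rule nth_equalityI)
    show "length u = length (take (length u) (drop i P))" using lenP by simp
    fix k assume k: "k < length u"
    have "u ! k = inf_word f a (i + k)" using k by (subst u) simp
    also have "\<dots> = P ! (i + k)" unfolding P_def using k lenP by (intro inf_word_nth) (simp add: P_def)
    finally show "u ! k = take (length u) (drop i P) ! k" using k lenP by simp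
  qed
  then have "P = take i P @ u @ drop (length u) (drop i P)"
    by (metis append_take_drop_id)
  then show ?thesis by (metis P_def iter_a)
qed

lemma infix_imp:
  assumes "iter_subst f n [a] = ps @ u @ ss"
  shows "is_factor (inf_word f a) u"
proof -
  define P where "P = inf_prefix f a n"
  have P: "P = ps @ u @ ss" using assms by (simp add: P_def iter_a)
  have "u = map (inf_word f a) [length ps..<length ps + length u]"
  proof (rule nth_equalityI)
    show "length u = length (map (inf_word f a) [length ps..<length ps + length u])" by simp
    fix k assume k: "k < length u"
    have "inf_word f a (length ps + k) = P ! (length ps + k)"
      unfolding P_def by (rule inf_word_nth) (use k P in \<open>simp add: P_def[symmetric]\<close>)
    also have "\<dots> = u ! k" using k P by (simp add: nth_append)
    finally show "u ! k = map (inf_word f a) [length ps..<length ps + length u] ! k" using k by simp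
  qed
  then show ?thesis by (auto simp: is_factor_def)
qed

end

lemma lemmaA:
  assumes ext: "extends_over f a" and fin: "finite (bounded_factors f a)"
    and t: "t \<in> growing_letters f" and occ: "iter_subst f m0 [a] = ps @ [t] @ ss"
  shows "\<exists>n. M < gcount f (iter_subst f n [t])"
proof (rule ccontr)
  assume "\<not> ?thesis"
  then have M: "\<And>n. gcount f (iter_subst f n [t]) \<le> M" by (simp add: not_less)
  define L where "L = Max (length ` bounded_factors f a)"
  have "length (iter_subst f n [t]) \<le> M + (M + 1) * L" for n
  proof -
    have "length (iter_subst f n [t]) \<le> gcount f (iter_subst f n [t]) + (gcount f (iter_subst f n [t]) + 1) * L"
      unfolding gcount_def
    proof (rule block_bound)
      fix ps' v ss'
      assume d: "iter_subst f n [t] = ps' @ v @ ss'" and v: "\<forall>c\<in>set v. c \<notin> growing_letters f"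
      have "iter_subst f (n + m0) [a] = (iter_subst f n ps @ ps') @ v @ (ss' @ iter_subst f n ss)"
        using arg_cong[OF occ, of "iter_subst f n"] d by (simp add: it_add it_Cons[of f n t ss])
      then have "is_factor (inf_word f a) v" by (rule infix_imp[OF ext])
      moreover have "bounded_word f v" using v by (rule bounded_all)
      ultimately have "v \<in> bounded_factors f a" by (simp add: bounded_factors_def)
      then show "length v \<le> L" unfolding L_def using fin by simp
    qed
    also have "\<dots> \<le> M + (M + 1) * L" using M[of n] by (intro add_mono mult_right_mono) auto
    finally show ?thesis .
  qed
  then have "bounded_word f [t]" by (auto simp: bw_iff)
  then show False using t by (simp add: growing_letters_def)
qed



lemma grow_split_props:
  "grow_split P xs = (u, bs) \<Longrightarrow> xs = u @ concat (map (\<lambda>p. fst p # snd p) bs) \<and> (\<forall>c\<in>set u. \<not> P c)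
     \<and> (\<forall>p\<in>set bs. P (fst p) \<and> (\<forall>c\<in>set (snd p). \<not> P c))"
proof (induction xs arbitrary: u bs)
  case Nil then show ?case by simp
next
  case (Cons x xs)
  obtain u0 bs0 where g: "grow_split P xs = (u0, bs0)" by fastforce
  show ?case using Cons.prems Cons.IH[OF g] g by (auto split: if_splits)
qed

definition Vset :: "('a \<Rightarrow> 'a list) \<Rightarrow> ('a \<times> 'a list \<times> 'a) set" where
  "Vset f = {(t, w, t'). t \<in> growing_letters f \<and> t' \<in> growing_letters f \<and> (\<forall>c\<in>set w. c \<notin> growing_letters f)}"

definition Kw :: "('a \<times> 'a list \<times> 'a) list \<Rightarrow> 'a list" where
  "Kw S = concat (map (\<lambda>(t, w, t'). t # w) S)"

lemma Kw_simps[simp]: "Kw [] = []" "Kw (s # S) = (case s of (t, w, t') \<Rightarrow> t # w) @ Kw S"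
  "Kw (S @ S') = Kw S @ Kw S'"
  by (auto simp: Kw_def)

lemma psi_props:
  assumes s: "(t, w, t') \<in> Vset f"
  shows "set (psi f (t, w, t')) \<subseteq> Vset f \<and>
    (\<exists>w0 w''. (\<forall>c\<in>set w0. c \<notin> growing_letters f) \<and> (\<forall>c\<in>set w''. c \<notin> growing_letters f) \<and>
       subst_word f (t # w) @ w'' = w0 @ Kw (psi f (t, w, t')))"
proof -
  define G where "G = (\<lambda>c. c \<in> growing_letters f)"
  obtain w0 bs where g1: "grow_split G (subst_word f (t # w)) = (w0, bs)" by fastforce
  obtain w'' bs' where g2: "grow_split G (f t') = (w'', bs')" by fastforce
  note p1 = grow_split_props[OF g1] and p2 = grow_split_props[OF g2]
  have tg: "t \<in> growing_letters f" and t'g: "t' \<in> growing_letters f"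
    and wn: "\<forall>c\<in>set w. c \<notin> growing_letters f" using s by (auto simp: Vset_def)
  have "bs \<noteq> []"
  proof
    assume "bs = []"
    then have "\<forall>c\<in>set (subst_word f (t # w)). \<not> G c" using p1 by simp
    then show False using grow_img[OF tg] by (auto simp: sw_Cons G_def)
  qed
  then obtain bs0 b where bs: "bs = bs0 @ [b]" by (metis rev_exhaust)
  have "bs' \<noteq> []"
  proof
    assume "bs' = []"
    then have "\<forall>c\<in>set (f t'). \<not> G c" using p2 by simp
    then show False using grow_img[OF t'g] by (auto simp: G_def)
  qed
  define ts where "ts = map fst bs @ [fst (hd bs')]"
  define ws where "ws = map snd (butlast bs) @ [snd (last bs) @ w'']"
  have psi: "psi f (t, w, t') = map (\<lambda>i. (ts ! i, ws ! i, ts ! Suc i)) [0..<length bs]"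
    unfolding psi_def Let_def G_def[symmetric] using g1 g2 by (simp add: ts_def ws_def)
  have tsg: "\<forall>x\<in>set ts. x \<in> growing_letters f"
    using p1 p2 \<open>bs' \<noteq> []\<close> by (auto simp: ts_def G_def)
  have wsn: "\<forall>x\<in>set ws. \<forall>c\<in>set x. c \<notin> growing_letters f"
    using p1 p2 by (auto simp: ws_def bs G_def)
  have lts: "length ts = Suc (length bs)" and lws: "length ws = length bs"
    using \<open>bs \<noteq> []\<close> by (auto simp: ts_def ws_def)
  have set1: "set (psi f (t, w, t')) \<subseteq> Vset f"
  proof
    fix x assume "x \<in> set (psi f (t, w, t'))"
    then obtain i where i: "i < length bs" and x: "x = (ts ! i, ws ! i, ts ! Suc i)"
      unfolding psi by auto
    have "ts ! i \<in> set ts" "ts ! Suc i \<in> set ts" "ws ! i \<in> set ws" using i lts lws by auto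
    then show "x \<in> Vset f" using x tsg wsn by (auto simp: Vset_def)
  qed
  have ts_i: "i < length bs0 \<Longrightarrow> ts ! i = fst (bs0 ! i)" for i by (simp add: ts_def bs nth_append)
  have ws_i: "i < length bs0 \<Longrightarrow> ws ! i = snd (bs0 ! i)" for i by (simp add: ws_def bs nth_append)
  have ts_l: "ts ! length bs0 = fst b" by (simp add: ts_def bs nth_append)
  have ws_l: "ws ! length bs0 = snd b @ w''" by (simp add: ws_def bs nth_append)
  have "Kw (psi f (t, w, t')) = concat (map (\<lambda>i. ts ! i # ws ! i) [0..<length bs])"
    unfolding psi by (simp add: Kw_def o_def)
  also have "\<dots> = concat (map (\<lambda>i. ts ! i # ws ! i) [0..<length bs0]) @ (fst b # snd b @ w'')"
    by (simp add: bs ts_l ws_l)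
  also have "map (\<lambda>i. ts ! i # ws ! i) [0..<length bs0] = map (\<lambda>p. fst p # snd p) bs0"
    by (rule nth_equalityI) (simp_all add: ts_i ws_i)
  finally have K: "Kw (psi f (t, w, t')) = concat (map (\<lambda>p. fst p # snd p) bs) @ w''"
    by (simp add: bs)
  have "subst_word f (t # w) @ w'' = w0 @ Kw (psi f (t, w, t'))"
    using p1 K by simp
  then show ?thesis using set1 p1 p2 by (auto simp: G_def)
qed

lemma psi_count:
  assumes "s \<in> Vset f"
  shows "gcount f (iter_subst f n (Kw (psi f s))) = gcount f (iter_subst f (Suc n) (Kw [s]))"
proof -
  obtain t w t' where s: "s = (t, w, t')" by (cases s) auto
  from psi_props[of t w t' f] assms s obtain w0 w'' where
    n0: "\<forall>c\<in>set w0. c \<notin> growing_letters f" and n1: "\<forall>c\<in>set w''. c \<notin> growing_letters f"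
    and e: "subst_word f (t # w) @ w'' = w0 @ Kw (psi f (t, w, t'))" by blast
  have "gcount f (iter_subst f n (Kw (psi f s))) = gcount f (iter_subst f n (w0 @ Kw (psi f s)))"
    using gcount_zero[OF iter_nongrow[OF n0, of n]] by simp
  also have "\<dots> = gcount f (iter_subst f n (subst_word f (t # w) @ w''))" using e s by simp
  also have "\<dots> = gcount f (iter_subst f (Suc n) (t # w))"
    using gcount_zero[OF iter_nongrow[OF n1, of n]] by (simp add: it_Suc2)
  finally show ?thesis using s by simp
qed

lemma psi_word_V: "set S \<subseteq> Vset f \<Longrightarrow> set (subst_word (psi f) S) \<subseteq> Vset f"
  using psi_props by (fastforce simp: sw_set)

lemma psi_word_count:
  "set S \<subseteq> Vset f \<Longrightarrow> gcount f (iter_subst f n (Kw (subst_word (psi f) S))) = gcount f (iter_subst f (Suc n) (Kw S))"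
proof (induction S)
  case Nil then show ?case by simp
next
  case (Cons s S)
  have "Kw (s # S) = Kw [s] @ Kw S" by simp
  then show ?case using Cons psi_count[of s f n] by (simp add: sw_Cons del: Kw_simps(2))
qed

lemma count_main:
  "set S \<subseteq> Vset f \<Longrightarrow> length (iter_subst (psi f) n S) = gcount f (iter_subst f n (Kw S))"
proof (induction n arbitrary: S)
  case 0
  then show ?case
  proof (induction S)
    case Nil then show ?case by (simp add: gcount_def)
  next
    case (Cons s S) then show ?case by (auto simp: Vset_def gcount_def filter_empty_conv)
  qed
next
  case (Suc n)
  then show ?case by (simp add: it_Suc2[of "psi f"] psi_word_V psi_word_count)
qed



theorem proposition2:
  fixes \<phi> :: "'a::finite \<Rightarrow> 'a list" and a :: 'a
  assumes "non_erasing \<phi>"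
    and "extends_over \<phi> a"
    and "finite (bounded_factors \<phi> a)"
  shows "\<forall>c \<in> C_alph \<phi> a.
           filterlim (\<lambda>n. length (iter_subst (psi \<phi>) n [c])) at_top sequentially"
proof
  fix c assume c: "c \<in> C_alph \<phi> a"
  obtain t w t' where ct: "c = (t, w, t')" by (cases c) auto
  have tg: "t \<in> growing_letters \<phi>" and t'g: "t' \<in> growing_letters \<phi>"
    and wb: "w \<in> bounded_factors \<phi> a" and fac: "is_factor (inf_word \<phi> a) (t # w @ [t'])"
    using c ct by (auto simp: C_alph_def)
  have wn: "\<forall>x\<in>set w. x \<notin> growing_letters \<phi>"
    using wb bounded_letters by (fastforce simp: bounded_factors_def)
  have cV: "set [c] \<subseteq> Vset \<phi>" using ct tg t'g wn by (simp add: Vset_def)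
  have "is_factor (inf_word \<phi> a) [t]"
  proof -
    define u where "u = t # w @ [t']"
    from fac obtain i where i: "u = map (inf_word \<phi> a) [i..<i + length u]"
      unfolding is_factor_def u_def[symmetric] by blast
    have "t = u ! 0" by (simp add: u_def)
    also have "\<dots> = map (inf_word \<phi> a) [i..<i + length u] ! 0" using i by simp
    also have "\<dots> = inf_word \<phi> a i" by (subst nth_map_upt) (simp_all add: u_def)
    finally have "t = inf_word \<phi> a i" .
    then show ?thesis unfolding is_factor_def by (intro exI[of _ i]) simp
  qed
  then obtain m0 ps ss where occ: "iter_subst \<phi> m0 [a] = ps @ [t] @ ss"
    using factor_imp[OF assms(2)] by blast
  have len: "length (iter_subst (psi \<phi>) n [c]) \<ge> gcount \<phi> (iter_subst \<phi> n [t])" for n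
    using count_main[OF cV, of n] ct it_Cons[of \<phi> n t w] by simp
  show "filterlim (\<lambda>n. length (iter_subst (psi \<phi>) n [c])) at_top sequentially"
    unfolding filterlim_at_top eventually_sequentially
  proof
    fix Z :: nat
    obtain N where N: "Z < gcount \<phi> (iter_subst \<phi> N [t])"
      using lemmaA[OF assms(2) assms(3) tg occ] by blast
    have "\<forall>n\<ge>N. Z \<le> length (iter_subst (psi \<phi>) n [c])"
      using N gcount_mono[of N _ \<phi> "[t]"] len by (meson le_trans less_imp_le)
    then show "\<exists>N. \<forall>n\<ge>N. Z \<le> length (iter_subst (psi \<phi>) n [c])" by blast
  qed
qed

end
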